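(* Let $g$ be a generalized string over a finite alphabet $\Sigma$ and let $M_g=\mathrm{NFA}_\circlearrowleft(g)$. Then $\mathrm{SubsetConstruction}(M_g)$ is a minimal DFA.
   Context: For a finite alphabet $\Sigma$, the generalized alphabet is $\mathcal{G}_\Sigma=\mathcal{P}(\Sigma)\setminus\{\emptyset\}$; a generalized string $g=g[1]\cdots g[|g|]$ is a finite string over $\mathcal{G}_\Sigma$. $\mathrm{NFA}(g)=(Q,\Sigma,\Delta,Q_\alpha,F)$ with $Q=\{0,\dots,|g|\}$, $\Delta(q,\sigma)=\{q+1\}$ if $q<|g|$ and $\sigma\in g[q+1]$, and $\Delta(q,\sigma)=\emptyset$ otherwise; $Q_\alpha=\{0\}$, $F=\{|g|\}$. $\mathrm{NFA}_\circlearrowleft(g)=(Q,\Sigma,\Delta_\circlearrowleft,Q_\alpha,F)$ where $\Delta_\circlearrowleft(q,\sigma)=\{q\}\cup\Delta(q,\sigma)$ if $q\in Q_\alpha$ and $\Delta_\circlearrowleft(q,\sigma)=\Delta(q,\sigma)$ otherwise. For an NFA $(Q,\Sigma,\Delta,Q_\alpha,F)$, $\mathrm{SubsetConstruction}$ denotes the DFA whose states are the subsets $\hat\delta(Q_\alpha,s)\subseteq Q$, $s\in\Sigma^*$, with $\delta(Q',\sigma)=\bigcup_{q\in Q'}\Delta(q,\sigma)$ (extended to strings), start state $Q_\alpha$ and accepting states the subsets meeting $F$. A DFA is minimal if no DFA with fewer states recognizes the same language. *)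

theory Defs
  imports Main
begin

record ('q, 'a) nfa =
  nstates :: "'q set"
  ntrans  :: "'q \<Rightarrow> 'a \<Rightarrow> 'q set"
  ninit   :: "'q set"
  nfinal  :: "'q set"

record ('q, 'a) dfa =
  dstates :: "'q set"
  dtrans  :: "'q \<Rightarrow> 'a \<Rightarrow> 'q"
  dinit   :: "'q"
  dfinal  :: "'q set"

definition is_dfa :: "'a set \<Rightarrow> ('q, 'a) dfa \<Rightarrow> bool" where
  "is_dfa Sig M \<longleftrightarrow> finite (dstates M) \<and> dinit M \<in> dstates M \<and> dfinal M \<subseteq> dstates M
     \<and> (\<forall>q\<in>dstates M. \<forall>a\<in>Sig. dtrans M q a \<in> dstates M)"

definition dlang :: "'a set \<Rightarrow> ('q, 'a) dfa \<Rightarrow> 'a list set" where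
  "dlang Sig M = {w. set w \<subseteq> Sig \<and> foldl (dtrans M) (dinit M) w \<in> dfinal M}"

definition gen_string :: "'a set \<Rightarrow> 'a set list \<Rightarrow> bool" where
  "gen_string Sig g \<longleftrightarrow> (\<forall>x\<in>set g. x \<noteq> {} \<and> x \<subseteq> Sig)"

text \<open>NFA(g): states 0..|g|, transition q -sigma-> q+1 iff q < |g| and sigma in g[q+1]
  (1-indexed in the paper, i.e. g ! q here).\<close>
definition NFA_g :: "'a set list \<Rightarrow> (nat, 'a) nfa" where
  "NFA_g g = \<lparr> nstates = {0..length g},
               ntrans = (\<lambda>q \<sigma>. if q < length g \<and> \<sigma> \<in> g ! q then {Suc q} else {}),
               ninit = {0},
               nfinal = {length g} \<rparr>"

definition NFA_loop :: "'a set list \<Rightarrow> (nat, 'a) nfa" where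
  "NFA_loop g = (let N = NFA_g g in
     N \<lparr> ntrans := (\<lambda>q \<sigma>. (if q \<in> ninit N then {q} else {}) \<union> ntrans N q \<sigma>) \<rparr>)"

definition nset_trans :: "('q, 'a) nfa \<Rightarrow> 'q set \<Rightarrow> 'a \<Rightarrow> 'q set" where
  "nset_trans N Q a = (\<Union>q\<in>Q. ntrans N q a)"

definition subset_construction :: "'a set \<Rightarrow> ('q, 'a) nfa \<Rightarrow> ('q set, 'a) dfa" where
  "subset_construction Sig N =
     (let S = {foldl (nset_trans N) (ninit N) w | w. set w \<subseteq> Sig} in
      \<lparr> dstates = S,
        dtrans = nset_trans N,
        dinit = ninit N,
        dfinal = {Q \<in> S. Q \<inter> nfinal N \<noteq> {}} \<rparr>)"

text \<open>Minimality: no DFA recognizing the same language has fewer states. Competing DFAs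
  are taken with states of type nat (every finite DFA can be relabelled into nat).\<close>
definition minimal_dfa :: "'a set \<Rightarrow> ('q, 'a) dfa \<Rightarrow> bool" where
  "minimal_dfa Sig M \<longleftrightarrow> is_dfa Sig M \<and>
     (\<forall>M' :: (nat, 'a) dfa. is_dfa Sig M' \<and> dlang Sig M' = dlang Sig M
        \<longrightarrow> card (dstates M) \<le> card (dstates M'))"

end

theory Submission
  imports Defs
begin

lemma loop_simps:
  "ninit (NFA_loop g) = {0}" "nfinal (NFA_loop g) = {length g}"
  "ntrans (NFA_loop g) q a = (if q = 0 then {0} else {}) \<union> (if q < length g \<and> a \<in> g ! q then {Suc q} else {})"
  by (simp_all add: NFA_loop_def NFA_g_def Let_def)

lemma loop_inv:
  "x \<in> foldl (nset_trans (NFA_loop g)) Q v \<Longrightarrow>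
   \<exists>p\<in>Q. x \<le> p + length v \<and> (p \<noteq> 0 \<longrightarrow> x = p + length v)"
proof (induction v arbitrary: Q)
  case Nil then show ?case by auto
next
  case (Cons a v)
  from Cons.IH[of "nset_trans (NFA_loop g) Q a"] Cons.prems
  obtain p' where p': "p' \<in> nset_trans (NFA_loop g) Q a" "x \<le> p' + length v"
    "p' \<noteq> 0 \<longrightarrow> x = p' + length v" by auto
  then obtain p where p: "p \<in> Q" "p' \<in> ntrans (NFA_loop g) p a" by (auto simp: nset_trans_def)
  show ?case
    by (rule bexI[of _ p]) (use p p' in \<open>auto simp: loop_simps split: if_splits\<close>)
qed

lemma loop_bounded:
  "Q \<subseteq> {0..length g} \<Longrightarrow> foldl (nset_trans (NFA_loop g)) Q v \<subseteq> {0..length g}"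
proof (induction v arbitrary: Q)
  case Nil then show ?case by auto
next
  case (Cons a v)
  have "nset_trans (NFA_loop g) Q a \<subseteq> {0..length g}"
    using Cons.prems by (auto simp: nset_trans_def loop_simps split: if_splits)
  then show ?case using Cons.IH by simp
qed

lemma loop_zero:
  "0 \<in> Q \<Longrightarrow> 0 \<in> foldl (nset_trans (NFA_loop g)) Q v"
proof (induction v arbitrary: Q)
  case Nil then show ?case by auto
next
  case (Cons a v)
  have "0 \<in> nset_trans (NFA_loop g) Q a"
    using Cons.prems by (auto simp: nset_trans_def loop_simps)
  then show ?case using Cons.IH by simp
qed

lemma loop_pos:
  assumes "\<forall>i<length g. c i \<in> g ! i"
  shows "q \<in> Q \<Longrightarrow> q + k = length g \<Longrightarrow>
     length g \<in> foldl (nset_trans (NFA_loop g)) Q (map c [q..<q+k])"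
proof (induction k arbitrary: q Q)
  case 0 then show ?case by simp
next
  case (Suc k)
  have "Suc q \<in> nset_trans (NFA_loop g) Q (c q)"
    unfolding nset_trans_def
    by (rule UN_I[of q]) (use Suc.prems assms in \<open>auto simp: loop_simps\<close>)
  moreover have "[q..<q + Suc k] = q # [Suc q..<Suc q + k]"
    by (simp add: upt_rec)
  ultimately show ?case using Suc.IH[of "Suc q" "nset_trans (NFA_loop g) Q (c q)"] Suc.prems
    by (simp only: list.map foldl_Cons) simp
qed

lemma dfa_run_in:
  "is_dfa Sig M \<Longrightarrow> q \<in> dstates M \<Longrightarrow> set w \<subseteq> Sig \<Longrightarrow> foldl (dtrans M) q w \<in> dstates M"
  by (induction w arbitrary: q) (auto simp: is_dfa_def)

theorem mainTheorem4:
  fixes Sig :: "'a set" and g :: "'a set list"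
  assumes "finite Sig"
    and "gen_string Sig g"
  shows "minimal_dfa Sig (subset_construction Sig (NFA_loop g))"
proof -
  define n where "n = length g"
  let ?N = "NFA_loop g"
  let ?d = "nset_trans ?N"
  define R where "R = {foldl ?d {0} w | w. set w \<subseteq> Sig}"
  have SC: "subset_construction Sig ?N = \<lparr>dstates = R, dtrans = ?d, dinit = {0},
      dfinal = {Q\<in>R. Q \<inter> {n} \<noteq> {}}\<rparr>"
    by (simp add: subset_construction_def R_def loop_simps n_def)
  have Rsub: "R \<subseteq> Pow {0..n}"
    using loop_bounded[of "{0}" g] by (auto simp: R_def n_def)
  have finR: "finite R" by (rule finite_subset[OF Rsub]) simp
  have R0: "\<And>S. S \<in> R \<Longrightarrow> 0 \<in> S" using loop_zero by (auto simp: R_def)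
  have isdfa: "is_dfa Sig (subset_construction Sig ?N)"
    unfolding SC is_dfa_def
  proof (simp add: finR, intro conjI ballI)
    show "{0} \<in> R" unfolding R_def by (auto intro: exI[of _ "[]"])
  next
    fix Q a assume "Q \<in> R" "a \<in> Sig"
    then obtain w where w: "set w \<subseteq> Sig" "Q = foldl ?d {0} w" by (auto simp: R_def)
    then show "?d Q a \<in> R" unfolding R_def using \<open>a \<in> Sig\<close>
      by (auto intro!: exI[of _ "w @ [a]"])
  qed
  have lang: "dlang Sig (subset_construction Sig ?N) = {w. set w \<subseteq> Sig \<and> n \<in> foldl ?d {0} w}"
    unfolding dlang_def SC R_def by auto
  define c where "c i = (SOME x. x \<in> g ! i)" for i
  have c: "\<forall>i<n. c i \<in> g ! i \<and> c i \<in> Sig"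
  proof (intro allI impI)
    fix i assume "i < n"
    then have "g ! i \<in> set g" by (simp add: n_def)
    then have "g ! i \<noteq> {}" "g ! i \<subseteq> Sig" using assms(2) by (auto simp: gen_string_def)
    then show "c i \<in> g ! i \<and> c i \<in> Sig" unfolding c_def by (metis some_in_eq subsetD)
  qed
  have dist: "\<exists>v. set v \<subseteq> Sig \<and> (n \<in> foldl ?d S v) \<noteq> (n \<in> foldl ?d T v)"
    if ST: "S \<in> R" "T \<in> R" "S \<noteq> T" for S T
  proof -
    obtain q where q: "q \<in> S \<and> q \<notin> T \<or> q \<in> T \<and> q \<notin> S" using ST by blast
    have q0: "q \<noteq> 0" using q R0 ST by auto
    have qn: "q \<le> n" using q Rsub ST by (meson PowD atLeastAtMost_iff subsetD)
    let ?v = "map c [q..<n]"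
    have vS: "set ?v \<subseteq> Sig" using c by auto
    have neg: "n \<notin> foldl ?d X ?v" if "q \<notin> X" for X
    proof
      assume "n \<in> foldl ?d X ?v"
      from loop_inv[OF this] obtain p where "p \<in> X" "n \<le> p + (n - q)" "p \<noteq> 0 \<longrightarrow> n = p + (n - q)"
        by auto
      moreover have "p \<noteq> 0 \<Longrightarrow> p = q" using \<open>p \<noteq> 0 \<longrightarrow> n = p + (n - q)\<close> qn by arith
      ultimately show False using that q0 qn by (cases "p = 0") auto
    qed
    have pos: "n \<in> foldl ?d X ?v" if "q \<in> X" for X
      using loop_pos[of g c q X "n - q"] that c qn by (simp add: n_def)
    show ?thesis using q neg pos vS by blast
  qed
  show ?thesis unfolding minimal_dfa_def
  proof (intro conjI allI impI, rule isdfa)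
    fix M' :: "(nat, 'a) dfa"
    assume M': "is_dfa Sig M' \<and> dlang Sig M' = dlang Sig (subset_construction Sig ?N)"
    define run where "run w = foldl (dtrans M') (dinit M') w" for w
    define wit where "wit S = (SOME w. set w \<subseteq> Sig \<and> foldl ?d {0} w = S)" for S
    have witp: "set (wit S) \<subseteq> Sig \<and> foldl ?d {0} (wit S) = S" if "S \<in> R" for S
      unfolding wit_def by (rule someI_ex) (use that in \<open>auto simp: R_def\<close>)
    have img: "(run \<circ> wit) ` R \<subseteq> dstates M'"
      using M' witp dfa_run_in[of Sig M' "dinit M'"] by (auto simp: run_def is_dfa_def)
    have inj: "inj_on (run \<circ> wit) R"
    proof (rule inj_onI, rule ccontr)
      fix S T assume S: "S \<in> R" and T: "T \<in> R" and eq: "(run \<circ> wit) S = (run \<circ> wit) T"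
        and ne: "S \<noteq> T"
      obtain v where v: "set v \<subseteq> Sig" "(n \<in> foldl ?d S v) \<noteq> (n \<in> foldl ?d T v)"
        using dist[OF S T ne] by blast
      have e: "foldl (dtrans M') (dinit M') (wit S @ v) = foldl (dtrans M') (dinit M') (wit T @ v)"
        using eq by (simp add: run_def)
      have "(wit S @ v \<in> dlang Sig M') = (wit T @ v \<in> dlang Sig M')"
        using e witp[OF S] witp[OF T] v by (simp add: dlang_def)
      then have "(n \<in> foldl ?d S v) = (n \<in> foldl ?d T v)"
        using M' witp[OF S] witp[OF T] v by (simp add: lang)
      then show False using v by simp
    qed
    have "card R \<le> card (dstates M')"
      using card_inj_on_le[OF inj img] M' by (simp add: is_dfa_def)
    then show "card (dstates (subset_construction Sig ?N)) \<le> card (dstates M')"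
      by (simp add: SC)
  qed
qed

end
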